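(* Let $n\ge2$. For any two polar $n$-complex numbers $u,u'$, $$|uu'|\le\sqrt n\,|u|\,|u'|,$$ where $|x_0+h_1x_1+\cdots+h_{n-1}x_{n-1}|=(x_0^2+\cdots+x_{n-1}^2)^{1/2}$. Consequently $|u^l|\le n^{(l-1)/2}|u|^l$ and $|au^l|\le n^{l/2}|a||u|^l$ for every natural number $l\ge1$ and polar $n$-complex $a,u$.
   Context: Polar $n$-complex numbers: $u=x_0+h_1x_1+\cdots+h_{n-1}x_{n-1}$, $x_j\in\mathbb{R}$, $h_0=1$, with componentwise addition and bilinear multiplication $h_jh_k=h_{(j+k)\bmod n}$. *)

theory Defs
  imports Complex_Main
begin

text \<open>A polar n-complex number x_0 + h_1 x_1 + ... + h_(n-1) x_(n-1) is represented by its
  coefficient function nat => real; only the coefficients at indices j < n are meaningful.\<close>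

definition pc_mult :: "nat \<Rightarrow> (nat \<Rightarrow> real) \<Rightarrow> (nat \<Rightarrow> real) \<Rightarrow> (nat \<Rightarrow> real)" where
  "pc_mult n u v = (\<lambda>k. \<Sum>i<n. \<Sum>j<n. if (i + j) mod n = k then u i * v j else 0)"

definition pc_one :: "nat \<Rightarrow> real" where
  "pc_one = (\<lambda>k. if k = 0 then 1 else 0)"

fun pc_pow :: "nat \<Rightarrow> (nat \<Rightarrow> real) \<Rightarrow> nat \<Rightarrow> (nat \<Rightarrow> real)" where
  "pc_pow n u 0 = pc_one"
| "pc_pow n u (Suc l) = pc_mult n u (pc_pow n u l)"

definition pc_abs :: "nat \<Rightarrow> (nat \<Rightarrow> real) \<Rightarrow> real" where
  "pc_abs n u = sqrt (\<Sum>j<n. (u j)\<^sup>2)"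

end

theory Submission imports Defs "HOL-Analysis.Convex" begin

lemma uniq0: fixes n i j j' :: nat assumes "j < n" "j' < n" "(i+j) mod n = (i+j') mod n" "j \<le> j'" shows "j = j'"
proof -
  have "n dvd (i+j') - (i+j)" using assms(3,4) by (subst mod_eq_dvd_iff_nat[symmetric]) auto
  hence "n dvd j' - j" by simp
  moreover have "j' - j < n" using assms by linarith
  ultimately have "j' - j = 0" using dvd_imp_le by (metis gr0I leD)
  thus ?thesis using assms(4) by simp
qed
lemma uniq: fixes n i j j' :: nat assumes "j < n" "j' < n" "(i+j) mod n = (i+j') mod n" shows "j = j'"
  using uniq0[of j n j' i] uniq0[of j' n j i] assms by (cases "j \<le> j'") auto

lemma card_le1: fixes n i k :: nat shows "card {j. j < n \<and> (i+j) mod n = k} \<le> 1"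
proof -
  have "finite {j. j < n \<and> (i+j) mod n = k}" by simp
  then show ?thesis unfolding One_nat_def
  proof (subst card_le_Suc0_iff_eq, assumption, intro ballI)
    fix a b assume "a \<in> {j. j < n \<and> (i+j) mod n = k}" "b \<in> {j. j < n \<and> (i+j) mod n = k}"
    then show "a = b" using uniq[of a n b i] by simp
  qed
qed

lemma inner_sum: fixes f :: "nat \<Rightarrow> real"
  assumes that: "f i \<ge> 0"
  shows "(\<Sum>j<n. if (i + j) mod n = k then f i else 0) \<le> f i"
proof -
  have "(\<Sum>j<n. if (i + j) mod n = k then f i else 0) = (\<Sum>j\<in>{j. j < n \<and> (i+j) mod n = k}. f i)"
    by (simp add: sum.If_cases lessThan_def Collect_conj_eq Int_commute)
  also have "\<dots> = card {j. j < n \<and> (i+j) mod n = k} * f i" by simp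
  also have "\<dots> \<le> f i" using card_le1[of n i k] that
    by (intro mult_left_le_one_le) auto
  finally show ?thesis .
qed

lemma inner_sum2: fixes f :: "nat \<Rightarrow> real"
  assumes that: "f j \<ge> 0"
  shows "(\<Sum>i<n. if (i + j) mod n = k then f j else 0) \<le> f j"
proof -
  have "(\<Sum>i<n. if (i + j) mod n = k then f j else 0) = (\<Sum>i<n. if (j + i) mod n = k then f j else 0)"
    by (intro sum.cong refl) (simp only: add.commute)
  also have "\<dots> \<le> f j" using inner_sum[where f=f and i=j and n=n and k=k] that by blast
  finally show ?thesis .
qed

lemma coef_bound: fixes u v :: "nat \<Rightarrow> real"
  shows "(pc_mult n u v k)^2 \<le> (\<Sum>i<n. (u i)^2) * (\<Sum>j<n. (v j)^2)"
proof -
  define c where "c = (\<lambda>(i::nat,j::nat). if (i + j) mod n = k then 1 else (0::real))"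
  have "pc_mult n u v k = (\<Sum>i<n. \<Sum>j<n. (c(i,j) * u i) * (c(i,j) * v j))"
    unfolding pc_mult_def c_def by (intro sum.cong) auto
  also have "\<dots> = (\<Sum>p\<in>{..<n}\<times>{..<n}. (c p * u (fst p)) * (c p * v (snd p)))"
    by (simp add: sum.cartesian_product split_def)
  finally have "pc_mult n u v k = (\<Sum>p\<in>{..<n}\<times>{..<n}. (c p * u (fst p)) * (c p * v (snd p)))" .
  hence CS: "(pc_mult n u v k)^2 \<le> (\<Sum>p\<in>{..<n}\<times>{..<n}. (c p * u (fst p))^2) * (\<Sum>p\<in>{..<n}\<times>{..<n}. (c p * v (snd p))^2)"
    using Cauchy_Schwarz_ineq_sum[of "\<lambda>p. c p * u (fst p)" "\<lambda>p. c p * v (snd p)" "{..<n}\<times>{..<n}"] by simp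
  have A: "(\<Sum>p\<in>{..<n}\<times>{..<n}. (c p * u (fst p))^2) \<le> (\<Sum>i<n. (u i)^2)"
  proof -
    have "(\<Sum>p\<in>{..<n}\<times>{..<n}. (c p * u (fst p))^2) = (\<Sum>i<n. \<Sum>j<n. (c(i,j) * u i)^2)"
      by (simp add: sum.cartesian_product split_def)
    also have "\<dots> = (\<Sum>i<n. \<Sum>j<n. if (i + j) mod n = k then (u i)^2 else 0)"
      unfolding c_def by (intro sum.cong) auto
    also have "\<dots> \<le> (\<Sum>i<n. (u i)^2)"
      by (rule sum_mono) (rule inner_sum, simp)
    finally show ?thesis .
  qed
  have B: "(\<Sum>p\<in>{..<n}\<times>{..<n}. (c p * v (snd p))^2) \<le> (\<Sum>j<n. (v j)^2)"
  proof -
    have "(\<Sum>p\<in>{..<n}\<times>{..<n}. (c p * v (snd p))^2) = (\<Sum>i<n. \<Sum>j<n. (c(i,j) * v j)^2)"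
      by (simp add: sum.cartesian_product split_def)
    also have "\<dots> = (\<Sum>j<n. \<Sum>i<n. (c(i,j) * v j)^2)" by (rule sum.swap)
    also have "\<dots> = (\<Sum>j<n. \<Sum>i<n. if (i + j) mod n = k then (v j)^2 else 0)"
      unfolding c_def by (intro sum.cong) auto
    also have "\<dots> \<le> (\<Sum>j<n. (v j)^2)"
      by (rule sum_mono) (rule inner_sum2, simp)
    finally show ?thesis .
  qed
  have "(\<Sum>p\<in>{..<n}\<times>{..<n}. (c p * u (fst p))^2) * (\<Sum>p\<in>{..<n}\<times>{..<n}. (c p * v (snd p))^2)
      \<le> (\<Sum>i<n. (u i)^2) * (\<Sum>j<n. (v j)^2)"
    using A B by (intro mult_mono) (auto intro: sum_nonneg)
  with CS show ?thesis by linarith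
qed

lemma abs_nonneg: "pc_abs n f \<ge> 0" unfolding pc_abs_def by (simp add: sum_nonneg)

lemma mult_ineq: fixes u v :: "nat \<Rightarrow> real"
  shows "pc_abs n (pc_mult n u v) \<le> sqrt (real n) * pc_abs n u * pc_abs n v"
proof -
  have "(\<Sum>k<n. (pc_mult n u v k)^2) \<le> (\<Sum>k<n. (\<Sum>i<n. (u i)^2) * (\<Sum>j<n. (v j)^2))"
    by (rule sum_mono) (rule coef_bound)
  also have "\<dots> = real n * ((\<Sum>i<n. (u i)^2) * (\<Sum>j<n. (v j)^2))" by simp
  finally have "sqrt (\<Sum>k<n. (pc_mult n u v k)^2) \<le> sqrt (real n * ((\<Sum>i<n. (u i)^2) * (\<Sum>j<n. (v j)^2)))"
    using real_sqrt_le_mono by blast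
  thus ?thesis unfolding pc_abs_def by (simp add: real_sqrt_mult mult.assoc)
qed

lemma mult_one: assumes "k < n" shows "pc_mult n u pc_one k = u k"
proof -
  have "pc_mult n u pc_one k = (\<Sum>i<n. \<Sum>j<n. if j = 0 then (if (i+j) mod n = k then u i else 0) else 0)"
    unfolding pc_mult_def pc_one_def by (intro sum.cong) auto
  also have "\<dots> = (\<Sum>i<n. if i = k then u i else 0)"
    using assms by (intro sum.cong) auto
  also have "\<dots> = u k" using assms by simp
  finally show ?thesis .
qed

lemma abs_cong: assumes "\<And>k. k < n \<Longrightarrow> f k = g k" shows "pc_abs n f = pc_abs n g"
  unfolding pc_abs_def using assms by simp

lemma pow_ineq: assumes "l \<ge> 1" and n1: "n \<ge> 1"
  shows "pc_abs n (pc_pow n u l) \<le> real n powr ((real l - 1) / 2) * pc_abs n u ^ l"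
  using assms(1)
proof (induction l rule: dec_induct)
  case base
  have "pc_abs n (pc_pow n u 1) = pc_abs n u"
    by (rule abs_cong) (simp add: mult_one)
  then show ?case using n1 by simp
next
  case (step m)
  have "pc_abs n (pc_pow n u (Suc m)) \<le> sqrt (real n) * pc_abs n u * pc_abs n (pc_pow n u m)"
    by (simp add: mult_ineq)
  also have "\<dots> \<le> sqrt (real n) * pc_abs n u * (real n powr ((real m - 1) / 2) * pc_abs n u ^ m)"
    by (intro mult_left_mono step.IH mult_nonneg_nonneg abs_nonneg) simp
  also have "\<dots> = (sqrt (real n) * real n powr ((real m - 1) / 2)) * pc_abs n u ^ Suc m"
    by (simp add: algebra_simps)
  also have "sqrt (real n) * real n powr ((real m - 1) / 2) = real n powr ((real (Suc m) - 1) / 2)"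
    using n1 by (simp add: powr_half_sqrt[symmetric] powr_add[symmetric] add_divide_distrib[symmetric])
  finally show ?case .
qed

theorem mainTheorem8:
  fixes n l :: nat and u u' a :: "nat \<Rightarrow> real"
  assumes "n \<ge> 2"
  shows "pc_abs n (pc_mult n u u') \<le> sqrt (real n) * pc_abs n u * pc_abs n u'
    \<and> (l \<ge> 1 \<longrightarrow>
         pc_abs n (pc_pow n u l) \<le> real n powr ((real l - 1) / 2) * pc_abs n u ^ l
       \<and> pc_abs n (pc_mult n a (pc_pow n u l)) \<le> real n powr (real l / 2) * pc_abs n a * pc_abs n u ^ l)"
proof (intro conjI impI)
  show "pc_abs n (pc_mult n u u') \<le> sqrt (real n) * pc_abs n u * pc_abs n u'" by (rule mult_ineq)
  assume l: "l \<ge> 1"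
  show "pc_abs n (pc_pow n u l) \<le> real n powr ((real l - 1) / 2) * pc_abs n u ^ l" using l assms by (intro pow_ineq) auto
  have "pc_abs n (pc_mult n a (pc_pow n u l)) \<le> sqrt (real n) * pc_abs n a * pc_abs n (pc_pow n u l)"
    by (rule mult_ineq)
  also have "\<dots> \<le> sqrt (real n) * pc_abs n a * (real n powr ((real l - 1) / 2) * pc_abs n u ^ l)"
    by (intro mult_left_mono pow_ineq l mult_nonneg_nonneg abs_nonneg) (use assms in auto)
  also have "\<dots> = (sqrt (real n) * real n powr ((real l - 1) / 2)) * pc_abs n a * pc_abs n u ^ l"
    by (simp add: algebra_simps)
  also have "sqrt (real n) * real n powr ((real l - 1) / 2) = real n powr (real l / 2)"
    using assms by (simp add: powr_half_sqrt[symmetric] powr_add[symmetric] add_divide_distrib[symmetric])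
  finally show "pc_abs n (pc_mult n a (pc_pow n u l)) \<le> real n powr (real l / 2) * pc_abs n a * pc_abs n u ^ l" .
qed

end
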